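(* Each of the logics $\mathbf{PD}$, $\mathsf{InqL}$ and $\mathbf{PT}$ is $\mathcal{F}$-structurally complete, where $\mathcal{F}$ is the class of all flat substitutions: for every such logic $\mathsf{L}$ and all formulas $\phi,\psi$ in the language of $\mathsf{L}$, if for every flat substitution $\sigma$ of $\mathsf{L}$, $\vdash_{\mathsf{L}}\sigma(\phi)$ implies $\vdash_{\mathsf{L}}\sigma(\psi)$, then $\phi\vdash_{\mathsf{L}}\psi$.
   Context: Fix a countably infinite set Prop of propositional variables. A valuation is a function $v:\mathrm{Prop}\to\{0,1\}$; a team is a set of valuations. Formulas of the extended propositional downwards closed team logic $\mathbf{PT}$ are given by $\phi::=p\mid\bot\mid\top\mid\,=\!(\phi_1,\dots,\phi_n,\phi)\mid\neg\phi\mid\phi\wedge\phi\mid\phi\otimes\phi\mid\phi\vee\phi\mid\phi\to\phi$ ($p\in\mathrm{Prop}$). Satisfaction of a formula on a team $X$: $X\models p$ iff $v(p)=1$ for all $v\in X$; $X\models\bot$ iff $X=\emptyset$; $X\models\top$ always; $X\models\phi\wedge\psi$ iff $X\models\phi$ and $X\models\psi$; $X\models\phi\otimes\psi$ iff $X=Y\cup Z$ for some $Y,Z\subseteq X$ with $Y\models\phi$, $Z\models\psi$; $X\models\phi\vee\psi$ iff $X\models\phi$ or $X\models\psi$; $X\models\phi\to\psi$ iff for every $Y\subseteq X$, $Y\models\phi$ implies $Y\models\psi$; $X\models\neg\phi$ iff $\{v\}\not\models\phi$ for all $v\in X$ (equivalently $X\models\phi\to\bot$); $X\models\,=\!(\phi_1,\dots,\phi_n,\psi)$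 iff $X\models\bigwedge_{i=1}^n(\phi_i\vee(\phi_i\to\bot))\to(\psi\vee(\psi\to\bot))$. A formula $\phi$ is flat if for every team $X$: $X\models\phi$ iff $\{v\}\models\phi$ for all $v\in X$. Formulas of the extended propositional dependence logic $\mathbf{PD}$ are given by $\phi::=p\mid\bot\mid\top\mid\,=\!(\alpha_1,\dots,\alpha_k,\beta)\mid\neg\phi\mid\phi\wedge\phi\mid\phi\otimes\phi$ where $\alpha_i,\beta$ are flat formulas of $\mathbf{PD}$; they are evaluated by the same clauses, where for flat arguments the dependence clause is equivalent to: $X\models\,=\!(\vec\alpha,\beta)$ iff for all $v,v'\in X$, if $\{v\}\models\alpha_i\Leftrightarrow\{v'\}\models\alpha_i$ for every $i$, then $\{v\}\models\beta\Leftrightarrow\{v'\}\models\beta$. Formulas of propositional inquisitive logic $\mathsf{InqL}$ are built from $p,\bot,\top$ using $\wedge,\vee,\to$ with the same clauses ($\neg\phi$ abbreviates $\phi\to\bot$). For finite $\Gamma$, $\Gamma\models\phi$ means every team satisfying all formulas of $\Gamma$ satisfies $\phi$; for $\mathsf{L}\in\{\mathbf{PD},\mathsf{InqL},\mathbf{PT}\}$, $\Gamma\vdash_{\mathsf{L}}\phi$ iff $\phi$ and all members of $\Gamma$ are in the language of $\mathsf{L}$ and $\Gamma\models\phi$; $\vdash_{\mathsf L}\phi$ means $\emptyset\vdash_{\mathsf L}\phi$. A substitution of $\mathsf{L}$ is a map from formulas of $\mathsf{L}$ to formulas of $\mathsf{L}$ commuting with all connectives and atoms (so $\sigma(\bot)=\bot$,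 $\sigma(\top)=\top$, $\sigma(\neg\phi)=\neg\sigma(\phi)$, $\sigma(\phi\circ\psi)=\sigma(\phi)\circ\sigma(\psi)$, $\sigma(=\!(\vec\phi,\psi))=\,=\!(\sigma(\vec\phi),\sigma(\psi))$); it is flat if $\sigma(p)$ is flat for every $p\in\mathrm{Prop}$. *)

theory Defs
  imports Main
begin

type_synonym valuation = "nat \<Rightarrow> bool"
type_synonym team = "valuation set"

text \<open>Formulas of PT. Dep ps q is the dependence atom =(ps_1,...,ps_n,q).\<close>
datatype fm =
    Var nat
  | Bot
  | Top
  | Dep "fm list" fm
  | Neg fm
  | Conj fm fm
  | Tensor fm fm
  | Idisj fm fm
  | Imp fm fm

fun sat :: "team \<Rightarrow> fm \<Rightarrow> bool" where
  "sat X (Var p) = (\<forall>v\<in>X. v p)"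
| "sat X Bot = (X = {})"
| "sat X Top = True"
| "sat X (Dep ps q) =
     (\<forall>Y\<subseteq>X. (\<forall>p\<in>set ps. sat Y p \<or> (\<forall>Z\<subseteq>Y. sat Z p \<longrightarrow> Z = {}))
        \<longrightarrow> (sat Y q \<or> (\<forall>Z\<subseteq>Y. sat Z q \<longrightarrow> Z = {})))"
| "sat X (Neg f) = (\<forall>v\<in>X. \<not> sat {v} f)"
| "sat X (Conj f g) = (sat X f \<and> sat X g)"
| "sat X (Tensor f g) = (\<exists>Y Z. Y \<subseteq> X \<and> Z \<subseteq> X \<and> X = Y \<union> Z \<and> sat Y f \<and> sat Z g)"
| "sat X (Idisj f g) = (sat X f \<or> sat X g)"
| "sat X (Imp f g) = (\<forall>Y\<subseteq>X. sat Y f \<longrightarrow> sat Y g)"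

definition flat :: "fm \<Rightarrow> bool" where
  "flat f \<longleftrightarrow> (\<forall>X. sat X f \<longleftrightarrow> (\<forall>v\<in>X. sat {v} f))"

text \<open>Languages of the three logics (as predicates on PT formulas).\<close>
definition inPT :: "fm \<Rightarrow> bool" where
  "inPT f = True"

fun inPD :: "fm \<Rightarrow> bool" where
  "inPD (Var p) = True"
| "inPD Bot = True"
| "inPD Top = True"
| "inPD (Dep ps q) = ((\<forall>p\<in>set ps. inPD p \<and> flat p) \<and> inPD q \<and> flat q)"
| "inPD (Neg f) = inPD f"
| "inPD (Conj f g) = (inPD f \<and> inPD g)"
| "inPD (Tensor f g) = (inPD f \<and> inPD g)"
| "inPD (Idisj f g) = False"
| "inPD (Imp f g) = False"

fun inInqL :: "fm \<Rightarrow> bool" where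
  "inInqL (Var p) = True"
| "inInqL Bot = True"
| "inInqL Top = True"
| "inInqL (Dep ps q) = False"
| "inInqL (Neg f) = False"
| "inInqL (Conj f g) = (inInqL f \<and> inInqL g)"
| "inInqL (Tensor f g) = False"
| "inInqL (Idisj f g) = (inInqL f \<and> inInqL g)"
| "inInqL (Imp f g) = (inInqL f \<and> inInqL g)"

definition entails :: "fm set \<Rightarrow> fm \<Rightarrow> bool" where
  "entails \<Gamma> f \<longleftrightarrow> (\<forall>X. (\<forall>g\<in>\<Gamma>. sat X g) \<longrightarrow> sat X f)"

definition derives :: "(fm \<Rightarrow> bool) \<Rightarrow> fm set \<Rightarrow> fm \<Rightarrow> bool" where
  "derives L \<Gamma> f \<longleftrightarrow> finite \<Gamma> \<and> L f \<and> (\<forall>g\<in>\<Gamma>. L g) \<and> entails \<Gamma> f"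

fun subst :: "(nat \<Rightarrow> fm) \<Rightarrow> fm \<Rightarrow> fm" where
  "subst s (Var p) = s p"
| "subst s Bot = Bot"
| "subst s Top = Top"
| "subst s (Dep ps q) = Dep (map (subst s) ps) (subst s q)"
| "subst s (Neg f) = Neg (subst s f)"
| "subst s (Conj f g) = Conj (subst s f) (subst s g)"
| "subst s (Tensor f g) = Tensor (subst s f) (subst s g)"
| "subst s (Idisj f g) = Idisj (subst s f) (subst s g)"
| "subst s (Imp f g) = Imp (subst s f) (subst s g)"

definition subst_of :: "(fm \<Rightarrow> bool) \<Rightarrow> (nat \<Rightarrow> fm) \<Rightarrow> bool" where
  "subst_of L s \<longleftrightarrow> (\<forall>f. L f \<longrightarrow> L (subst s f))"

definition flat_subst_of :: "(fm \<Rightarrow> bool) \<Rightarrow> (nat \<Rightarrow> fm) \<Rightarrow> bool" where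
  "flat_subst_of L s \<longleftrightarrow> subst_of L s \<and> (\<forall>p. flat (s p))"

end

theory Submission
  imports Defs
begin

lemma sat_empty: "sat {} f"
  by (induction f) auto

lemma sat_down: "sat X f \<Longrightarrow> U \<subseteq> X \<Longrightarrow> sat U f"
proof (induction f arbitrary: X U)
  case (Tensor f g)
  then obtain A B where ab: "A \<subseteq> X" "B \<subseteq> X" "X = A \<union> B" "sat A f" "sat B g" by auto
  have "sat (A \<inter> U) f" "sat (B \<inter> U) g" using Tensor.IH ab by auto
  moreover have "U = (A \<inter> U) \<union> (B \<inter> U)" using ab Tensor.prems by auto
  moreover have "A \<inter> U \<subseteq> U" "B \<inter> U \<subseteq> U" by auto
  ultimately show ?case unfolding sat.simps by blast
qed auto

lemma img_all: "(\<forall>Z\<subseteq>Y. Q (h`Z)) \<longleftrightarrow> (\<forall>Z'\<subseteq>h`Y. Q Z')"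
proof
  assume a: "\<forall>Z\<subseteq>Y. Q (h`Z)"
  show "\<forall>Z'\<subseteq>h`Y. Q Z'"
  proof (intro allI impI)
    fix Z' assume "Z' \<subseteq> h`Y"
    then have "h ` (Y \<inter> h -` Z') = Z'" by auto
    then show "Q Z'" using a[rule_format, of "Y \<inter> h -` Z'"] by auto
  qed
next
  assume a: "\<forall>Z'\<subseteq>h`Y. Q Z'"
  show "\<forall>Z\<subseteq>Y. Q (h`Z)"
  proof (intro allI impI)
    fix Z assume "Z \<subseteq> Y" then have "h`Z \<subseteq> h`Y" by auto
    then show "Q (h`Z)" using a by blast
  qed
qed

lemma img_ex: "(\<exists>A B. A \<subseteq> Y \<and> B \<subseteq> Y \<and> Y = A \<union> B \<and> P (h`A) \<and> R (h`B)) \<longleftrightarrow>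
   (\<exists>A B. A \<subseteq> h`Y \<and> B \<subseteq> h`Y \<and> h`Y = A \<union> B \<and> P A \<and> R B)"
proof
  assume "\<exists>A B. A \<subseteq> Y \<and> B \<subseteq> Y \<and> Y = A \<union> B \<and> P (h`A) \<and> R (h`B)"
  then obtain A B where "A \<subseteq> Y" "B \<subseteq> Y" "Y = A \<union> B" "P (h`A)" "R (h`B)" by blast
  then show "\<exists>A B. A \<subseteq> h`Y \<and> B \<subseteq> h`Y \<and> h`Y = A \<union> B \<and> P A \<and> R B"
    by (intro exI[of _ "h`A"] exI[of _ "h`B"]) auto
next
  assume "\<exists>A B. A \<subseteq> h`Y \<and> B \<subseteq> h`Y \<and> h`Y = A \<union> B \<and> P A \<and> R B"
  then obtain A B where ab: "A \<subseteq> h`Y" "B \<subseteq> h`Y" "h`Y = A \<union> B" "P A" "R B" by blast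
  have 1: "h ` (Y \<inter> h -` A) = A" "h ` (Y \<inter> h -` B) = B" using ab(1,2) by blast+
  have 2: "Y = (Y \<inter> h -` A) \<union> (Y \<inter> h -` B)" using ab(3) by auto
  show "\<exists>A B. A \<subseteq> Y \<and> B \<subseteq> Y \<and> Y = A \<union> B \<and> P (h`A) \<and> R (h`B)"
    apply (rule exI[of _ "Y \<inter> h -` A"], rule exI[of _ "Y \<inter> h -` B"])
    using 1 2 ab by auto
qed

lemma sat_subst:
  assumes fl: "\<forall>p. flat (s p)"
  shows "sat Y (subst s f) = sat ((\<lambda>w p. sat {w} (s p)) ` Y) f"
proof (induction f arbitrary: Y)
  case (Var x)
  have "sat Y (s x) = (\<forall>w\<in>Y. sat {w} (s x))" using fl unfolding flat_def by blast
  then show ?case by simp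
next
  case (Dep ps q)
  define H where "H = (\<lambda>w p. sat {w} (s p))"
  have IHq: "\<And>Z. sat Z (subst s q) = sat (H`Z) q" using Dep.IH(2) H_def by auto
  have IHp: "\<And>p Z. p \<in> set ps \<Longrightarrow> sat Z (subst s p) = sat (H`Z) p" using Dep.IH(1) H_def by auto
  define E where "E = (\<lambda>A p. sat A p \<or> (\<forall>W\<subseteq>A. sat W p \<longrightarrow> W = {}))"
  define Q where "Q = (\<lambda>A. (\<forall>p\<in>set ps. E A p) \<longrightarrow> E A q)"
  have Eq: "\<And>Z. (sat Z (subst s q) \<or> (\<forall>W\<subseteq>Z. sat W (subst s q) \<longrightarrow> W = {})) = E (H`Z) q"
  proof -
    fix Z
    have "(\<forall>W\<subseteq>Z. sat W (subst s q) \<longrightarrow> W = {}) = (\<forall>W\<subseteq>Z. (\<lambda>A. sat A q \<longrightarrow> A = {}) (H`W))"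
      using IHq by auto
    also have "\<dots> = (\<forall>W\<subseteq>H`Z. sat W q \<longrightarrow> W = {})" by (rule img_all)
    finally show "?thesis Z" using IHq E_def by auto
  qed
  have Ep: "\<And>Z p. p \<in> set ps \<Longrightarrow> (sat Z (subst s p) \<or> (\<forall>W\<subseteq>Z. sat W (subst s p) \<longrightarrow> W = {})) = E (H`Z) p"
  proof -
    fix Z p assume p: "p \<in> set ps"
    have "(\<forall>W\<subseteq>Z. sat W (subst s p) \<longrightarrow> W = {}) = (\<forall>W\<subseteq>Z. (\<lambda>A. sat A p \<longrightarrow> A = {}) (H`W))"
      using IHp[OF p] by auto
    also have "\<dots> = (\<forall>W\<subseteq>H`Z. sat W p \<longrightarrow> W = {})" by (rule img_all)
    finally show "?thesis Z p" using IHp[OF p] E_def by auto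
  qed
  have "sat Y (subst s (Dep ps q)) = (\<forall>Z\<subseteq>Y. Q (H`Z))"
    using Eq Ep unfolding Q_def by simp
  also have "\<dots> = (\<forall>Z\<subseteq>H`Y. Q Z)" by (rule img_all)
  also have "\<dots> = sat (H`Y) (Dep ps q)" unfolding Q_def E_def by simp
  finally show ?case unfolding H_def .
next
  case (Tensor f g)
  show ?case using img_ex[where P="\<lambda>A. sat A f" and R="\<lambda>A. sat A g"] Tensor.IH by simp
next
  case (Imp f g)
  show ?case using img_all[where Q="\<lambda>A. sat A f \<longrightarrow> sat A g"] Imp.IH by simp
qed auto

lemma sat_single_Imp: "sat {v} (Imp a b) = (sat {v} a \<longrightarrow> sat {v} b)"
proof -
  have "\<And>Y. Y \<subseteq> {v} \<longleftrightarrow> Y = {} \<or> Y = {v}" by auto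
  then show ?thesis using sat_empty by auto
qed

lemma flat_Var: "flat (Var p)" unfolding flat_def by auto
lemma flat_Top: "flat Top" unfolding flat_def by auto
lemma flat_Bot: "flat Bot" unfolding flat_def by auto
lemma flat_Neg: "flat (Neg a)" unfolding flat_def by auto
lemma flat_Conj: "flat a \<Longrightarrow> flat b \<Longrightarrow> flat (Conj a b)" unfolding flat_def sat.simps by blast
lemma flat_Imp: assumes "flat a" "flat b" shows "flat (Imp a b)"
  unfolding flat_def
proof (intro allI iffI)
  fix X assume "sat X (Imp a b)"
  then show "\<forall>v\<in>X. sat {v} (Imp a b)" using sat_down[of X "Imp a b"] by blast
next
  fix X assume h: "\<forall>v\<in>X. sat {v} (Imp a b)"
  show "sat X (Imp a b)" unfolding sat.simps
  proof (intro allI impI)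
    fix Y assume "Y \<subseteq> X" "sat Y a"
    then have "\<forall>v\<in>Y. sat {v} a" using assms(1) unfolding flat_def by blast
    then have "\<forall>v\<in>Y. sat {v} b" using h \<open>Y \<subseteq> X\<close> sat_single_Imp by blast
    then show "sat Y b" using assms(2) unfolding flat_def by blast
  qed
qed

definition cst :: "bool \<Rightarrow> fm" where "cst b = (if b then Top else Bot)"
definition cneg :: "bool \<Rightarrow> fm \<Rightarrow> fm" where "cneg m a = (if m then Neg a else Imp a Bot)"
definition cimp :: "bool \<Rightarrow> fm \<Rightarrow> fm \<Rightarrow> fm" where
  "cimp m a b = (if m then Neg (Conj a (Neg b)) else Imp a b)"
definition ite :: "bool \<Rightarrow> fm \<Rightarrow> fm \<Rightarrow> fm \<Rightarrow> fm" where
  "ite m a b c = Conj (cimp m a b) (cimp m (cneg m a) c)"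

fun sel :: "bool \<Rightarrow> valuation list \<Rightarrow> nat \<Rightarrow> nat \<Rightarrow> fm" where
  "sel m [] i p = Bot"
| "sel m [u] i p = cst (u p)"
| "sel m (u#v#us) i p = ite m (Var i) (cst (u p)) (sel m (v#us) (Suc i) p)"

fun pick :: "valuation \<Rightarrow> valuation list \<Rightarrow> nat \<Rightarrow> valuation" where
  "pick w [] i = (\<lambda>_. False)"
| "pick w [u] i = u"
| "pick w (u#v#us) i = (if w i then u else pick w (v#us) (Suc i))"

lemma flat_cst: "flat (cst b)" unfolding cst_def using flat_Top flat_Bot by auto
lemma flat_cneg: "flat a \<Longrightarrow> flat (cneg m a)" unfolding cneg_def using flat_Neg flat_Imp flat_Bot by auto
lemma flat_cimp: "flat a \<Longrightarrow> flat b \<Longrightarrow> flat (cimp m a b)" unfolding cimp_def using flat_Neg flat_Imp by auto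
lemma flat_ite: "flat a \<Longrightarrow> flat b \<Longrightarrow> flat c \<Longrightarrow> flat (ite m a b c)"
  unfolding ite_def by (intro flat_Conj flat_cimp flat_cneg)

lemma flat_sel: "flat (sel m us i p)"
  by (induction m us i p rule: sel.induct) (auto intro: flat_ite flat_cst flat_Var flat_Bot)

lemma sat_cst: "sat {v} (cst b) = b" unfolding cst_def by auto
lemma sat_cneg: "sat {v} (cneg m a) = (\<not> sat {v} a)" unfolding cneg_def by (cases m) (auto simp del: sat.simps(9) simp: sat_single_Imp)
lemma sat_cimp: "sat {v} (cimp m a b) = (sat {v} a \<longrightarrow> sat {v} b)" unfolding cimp_def by (cases m) (auto simp del: sat.simps(9) simp: sat_single_Imp)
lemma sat_ite: "sat {v} (ite m a b c) = (if sat {v} a then sat {v} b else sat {v} c)"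
  unfolding ite_def by (auto simp: sat_cimp sat_cneg)

lemma sat_sel: "sat {w} (sel m us i p) = pick w us i p"
  by (induction m us i p rule: sel.induct) (auto simp: sat_ite sat_cst)

lemma pick_in: "us \<noteq> [] \<Longrightarrow> pick w us i \<in> set us"
  by (induction w us i rule: pick.induct) auto

lemma pick_step: "us \<noteq> [] \<Longrightarrow> pick w (u#us) i = (if w i then u else pick w us (Suc i))"
  by (cases us) auto

lemma pick_idx: "j < length us \<Longrightarrow> pick (\<lambda>x. x = i + j) us i = us ! j"
proof (induction us arbitrary: i j)
  case Nil then show ?case by simp
next
  case (Cons u us)
  note IH = Cons.IH and lt = Cons.prems
  show ?case
  proof (cases "us = []")
    case True then show ?thesis using lt by simp
  next
    case ne: False
    show ?thesis
    proof (cases j)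
      case 0 then show ?thesis using ne pick_step by simp
    next
      case (Suc k)
      have e: "(\<lambda>x. x = i + j) = (\<lambda>x. x = Suc i + k)" using Suc by auto
      have "k < length us" using lt Suc by simp
      then have r: "pick (\<lambda>x. x = Suc i + k) us (Suc i) = us ! k" by (rule IH)
      have "pick (\<lambda>x. x = i + j) (u#us) i = pick (\<lambda>x. x = i + j) us (Suc i)"
        using pick_step[OF ne] Suc by simp
      also have "\<dots> = us ! k" using r e by simp
      finally show ?thesis using Suc by simp
    qed
  qed
qed

lemma range_pick: "us \<noteq> [] \<Longrightarrow> range (\<lambda>w. pick w us 0) = set us"
proof
  assume "us \<noteq> []"
  then show "range (\<lambda>w. pick w us 0) \<subseteq> set us" using pick_in by auto
next
  show "set us \<subseteq> range (\<lambda>w. pick w us 0)"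
  proof
    fix u assume "u \<in> set us"
    then obtain j where "j < length us" "us ! j = u" by (auto simp: in_set_conv_nth)
    then have "u = pick (\<lambda>x. x = j) us 0" using pick_idx[of j us 0] by simp
    then show "u \<in> range (\<lambda>w. pick w us 0)" using rangeI[of "\<lambda>w. pick w us 0" "\<lambda>x. x = j"] by simp
  qed
qed

lemma inPD_sel: "inPD (sel True us i p)"
  by (induction "True" us i p rule: sel.induct) (auto simp: ite_def cimp_def cneg_def cst_def)
lemma inInqL_sel: "inInqL (sel False us i p)"
  by (induction "False" us i p rule: sel.induct) (auto simp: ite_def cimp_def cneg_def cst_def)

lemma subst_flat: "\<forall>p. flat (s p) \<Longrightarrow> flat f \<Longrightarrow> flat (subst s f)"
proof -
  assume fl: "\<forall>p. flat (s p)" and ff: "flat f"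
  define H where "H = (\<lambda>w p. sat {w} (s p))"
  have e: "\<And>Y. sat Y (subst s f) = sat (H`Y) f" unfolding H_def by (rule sat_subst[OF fl])
  show ?thesis unfolding flat_def
  proof
    fix X
    have "sat X (subst s f) = sat (H`X) f" by (rule e)
    also have "\<dots> = (\<forall>u\<in>H`X. sat {u} f)" using ff[unfolded flat_def, THEN spec[of _ "H`X"]] .
    also have "\<dots> = (\<forall>w\<in>X. sat (H`{w}) f)" by simp
    also have "\<dots> = (\<forall>w\<in>X. sat {w} (subst s f))" by (simp only: e)
    finally show "sat X (subst s f) = (\<forall>w\<in>X. sat {w} (subst s f))" .
  qed
qed

lemma subst_of_PD: assumes "\<forall>p. inPD (s p) \<and> flat (s p)" shows "subst_of inPD s"
  unfolding subst_of_def
proof (intro allI impI)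
  fix f show "inPD f \<Longrightarrow> inPD (subst s f)"
  proof (induction f)
    case (Dep ps q)
    then show ?case using assms subst_flat[of s] by auto
  qed (use assms in auto)
qed

lemma subst_of_Inq: assumes "\<forall>p. inInqL (s p)" shows "subst_of inInqL s"
  unfolding subst_of_def
proof (intro allI impI)
  fix f show "inInqL f \<Longrightarrow> inInqL (subst s f)"
    by (induction f) (use assms in auto)
qed

fun vars :: "fm \<Rightarrow> nat set" where
  "vars (Var p) = {p}"
| "vars Bot = {}"
| "vars Top = {}"
| "vars (Dep ps q) = (\<Union>p\<in>set ps. vars p) \<union> vars q"
| "vars (Neg f) = vars f"
| "vars (Conj f g) = vars f \<union> vars g"
| "vars (Tensor f g) = vars f \<union> vars g"
| "vars (Idisj f g) = vars f \<union> vars g"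
| "vars (Imp f g) = vars f \<union> vars g"

lemma finite_vars: "finite (vars f)"
  by (induction f) auto

lemma subst_id: "vars f \<subseteq> V \<Longrightarrow> subst (\<lambda>p. if p \<in> V then Var p else Bot) f = f"
proof (induction f)
  case (Dep ps q)
  then show ?case by (auto intro: map_idI)
qed auto

definition rV :: "nat set \<Rightarrow> valuation \<Rightarrow> valuation" where
  "rV V w = (\<lambda>p. if p \<in> V then w p else False)"

lemma coinc: assumes "vars f \<subseteq> V" shows "sat X f = sat (rV V ` X) f"
proof -
  define s0 where "s0 = (\<lambda>p. if p \<in> V then Var p else Bot)"
  have fl: "\<forall>p. flat (s0 p)" unfolding s0_def using flat_Var flat_Bot by auto
  have H: "(\<lambda>w p. sat {w} (s0 p)) = rV V" unfolding s0_def rV_def by (auto intro!: ext)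
  have "sat X f = sat X (subst s0 f)" using subst_id[OF assms] s0_def by simp
  also have "\<dots> = sat ((\<lambda>w p. sat {w} (s0 p)) ` X) f" by (rule sat_subst[OF fl])
  finally show ?thesis unfolding H .
qed

theorem theorem5p4:
  assumes "L \<in> {inPD, inInqL, inPT}"
    and "L \<phi>" and "L \<psi>"
    and "\<forall>s. flat_subst_of L s \<longrightarrow>
           derives L {} (subst s \<phi>) \<longrightarrow> derives L {} (subst s \<psi>)"
  shows "derives L {\<phi>} \<psi>"
proof -
  have "entails {\<phi>} \<psi>"
  proof (rule ccontr)
    assume "\<not> entails {\<phi>} \<psi>"
    then obtain X where X1: "sat X \<phi>" and X2: "\<not> sat X \<psi>" unfolding entails_def by auto
    define V where "V = vars \<phi> \<union> vars \<psi>"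
    have fV: "finite V" unfolding V_def using finite_vars by auto
    define X' where "X' = rV V ` X"
    have Y1: "sat X' \<phi>" using X1 coinc[of \<phi> V X] unfolding V_def X'_def by auto
    have Y2: "\<not> sat X' \<psi>" using X2 coinc[of \<psi> V X] unfolding V_def X'_def by auto
    have "X' \<subseteq> (\<lambda>A p. p \<in> A) ` Pow V"
    proof
      fix u assume "u \<in> X'"
      then obtain w where "u = rV V w" unfolding X'_def by auto
      then have "u = (\<lambda>p. p \<in> {p\<in>V. w p})" unfolding rV_def by auto
      then show "u \<in> (\<lambda>A p. p \<in> A) ` Pow V" by blast
    qed
    then have fX: "finite X'" using fV finite_subset by blast
    have neX: "X' \<noteq> {}" using Y2 sat_empty by auto
    obtain us where us: "set us = X'" using finite_list[OF fX] by blast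
    have une: "us \<noteq> []" using us neX by auto
    define m where "m = (L \<noteq> inInqL)"
    define s where "s = (\<lambda>p. if p \<in> V then sel m us 0 p else Bot)"
    have fl: "\<forall>p. flat (s p)" unfolding s_def using flat_sel flat_Bot by auto
    have H: "(\<lambda>w p. sat {w} (s p)) = (\<lambda>w. pick w us 0)"
    proof (intro ext)
      fix w p
      show "sat {w} (s p) = pick w us 0 p"
      proof (cases "p \<in> V")
        case True then show ?thesis unfolding s_def by (simp add: sat_sel)
      next
        case False
        have "pick w us 0 \<in> X'" using pick_in[OF une] us by auto
        then obtain w' where "pick w us 0 = rV V w'" unfolding X'_def by auto
        then show ?thesis using False unfolding s_def rV_def by simp
      qed
    qed
    have rng: "range (\<lambda>w. pick w us 0) = X'" using range_pick[OF une] us by simp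
    have sub: "subst_of L s"
    proof (cases "L = inInqL")
      case True
      then have "\<not> m" unfolding m_def by simp
      then have "\<forall>p. inInqL (s p)" unfolding s_def using inInqL_sel by auto
      then show ?thesis using True subst_of_Inq by simp
    next
      case False
      then have mT: "m" unfolding m_def by simp
      show ?thesis
      proof (cases "L = inPD")
        case True
        have "\<forall>p. inPD (s p) \<and> flat (s p)" using fl mT inPD_sel unfolding s_def by auto
        then show ?thesis using True subst_of_PD by simp
      next
        case False
        then have "L = inPT" using assms(1) \<open>L \<noteq> inInqL\<close> by auto
        then show ?thesis unfolding subst_of_def inPT_def by simp
      qed
    qed
    have fs: "flat_subst_of L s" unfolding flat_subst_of_def using sub fl by simp
    have "derives L {} (subst s \<phi>)" unfolding derives_def entails_def
    proof (intro conjI allI impI)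
      show "L (subst s \<phi>)" using sub assms(2) unfolding subst_of_def by blast
      fix Y
      have "sat Y (subst s \<phi>) = sat ((\<lambda>w. pick w us 0) ` Y) \<phi>" using sat_subst[OF fl, of Y \<phi>] unfolding H .
      moreover have "(\<lambda>w. pick w us 0) ` Y \<subseteq> X'" using rng by auto
      ultimately show "sat Y (subst s \<phi>)" using sat_down[OF Y1] by simp
    qed simp_all
    then have "derives L {} (subst s \<psi>)" using assms(4) fs by blast
    then have "sat UNIV (subst s \<psi>)" unfolding derives_def entails_def by simp
    moreover have "sat UNIV (subst s \<psi>) = sat (range (\<lambda>w. pick w us 0)) \<psi>"
      using sat_subst[OF fl, of UNIV \<psi>] unfolding H .
    ultimately have "sat X' \<psi>" using rng by simp
    then show False using Y2 by simp
  qed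
  then show ?thesis unfolding derives_def using assms(2,3) by simp
qed

end
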